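(* Let $n = 2k+1$ be an odd integer and $m = \binom{n}{2} = k(2k+1)$. If an edge-coloring of a complete graph contains no rainbow $n$-cycle, then it contains no rainbow $m$-cycle.
   Context: A coloring is an arbitrary (not necessarily proper) assignment of colors, from an arbitrary set, to the edges of an undirected complete graph; the graph may be finite or infinite. A rainbow $n$-cycle is a cycle through $n$ distinct vertices whose $n$ edges all receive pairwise distinct colors. *)

theory Defs
  imports Main
begin

text \<open>A coloring of the complete graph on vertex type 'a assigns a color to every
  edge, i.e. to every 2-element set of vertices; it is given as a function
  c :: 'a set => 'c (only its values on doubletons matter).\<close>

definition rainbow_cycle :: "('a set \<Rightarrow> 'c) \<Rightarrow> nat \<Rightarrow> 'a list \<Rightarrow> bool" where
  "rainbow_cycle c n vs \<longleftrightarrow>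
     n \<ge> 3 \<and> length vs = n \<and> distinct vs \<and>
     inj_on (\<lambda>i. c {vs ! i, vs ! (Suc i mod n)}) {..<n}"

definition has_rainbow_cycle :: "('a set \<Rightarrow> 'c) \<Rightarrow> nat \<Rightarrow> bool" where
  "has_rainbow_cycle c n \<longleftrightarrow> (\<exists>vs. rainbow_cycle c n vs)"

end

theory Submission
  imports Defs
begin

lemma mk_rc:
  assumes "3 \<le> L" "inj_on f {..<L}" "inj_on (\<lambda>i. c {f i, f (Suc i mod L)}) {..<L}"
  shows "has_rainbow_cycle c L"
proof -
  let ?vs = "map f [0..<L]"
  have "inj_on (\<lambda>i. c {?vs ! i, ?vs ! (Suc i mod L)}) {..<L}"
  proof (subst inj_on_cong)
    show "\<And>a. a \<in> {..<L} \<Longrightarrow> c {?vs ! a, ?vs ! (Suc a mod L)} = c {f a, f (Suc a mod L)}"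
      using assms(1) by auto
  qed (use assms in auto)
  moreover have "distinct ?vs" using assms(2) by (simp add: distinct_map atLeast0LessThan)
  ultimately have "rainbow_cycle c L ?vs" unfolding rainbow_cycle_def using assms(1) by simp
  then show ?thesis unfolding has_rainbow_cycle_def by blast
qed

lemma split_rc:
  assumes rc: "rainbow_cycle c L ws" and d: "2 \<le> d" "d + 2 \<le> L"
  shows "has_rainbow_cycle c (d+1) \<or> has_rainbow_cycle c (L - d + 1)"
proof -
  define oc where "oc i = c {ws!i, ws!(Suc i mod L)}" for i
  have inj: "inj_on oc {..<L}" and dist: "distinct ws" and len: "length ws = L"
    using rc unfolding rainbow_cycle_def oc_def by auto
  define ch where "ch = c {ws!d, ws!0}"
  show ?thesis
  proof (cases "\<exists>p<d. ch = oc p")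
    case True
    then obtain p where p: "p < d" "ch = oc p" by blast
    define g where "g i = (if i = 0 then ws!0 else ws!(d+i-1))" for i
    define e where "e i = (if i = 0 then ch else oc (d+i-1))" for i
    have "has_rainbow_cycle c (L - d + 1)"
    proof (rule mk_rc[where f = g])
      show "3 \<le> L - d + 1" using d by simp
      show "inj_on g {..<L - d + 1}"
      proof
        fix i j assume "i \<in> {..<L - d + 1}" "j \<in> {..<L - d + 1}" "g i = g j"
        then show "i = j" using dist len d unfolding g_def
          by (auto simp: nth_eq_iff_index_eq split: if_splits)
      qed
      have ee: "c {g i, g (Suc i mod (L - d + 1))} = e i" if hi: "i < L - d + 1" for i
      proof -
        consider "i = 0" | "0 < i" "i < L - d" | "i = L - d" using hi by fastforce
        then show ?thesis
        proof cases
          case 1 then show ?thesis using d unfolding g_def e_def ch_def by (simp add: insert_commute)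
        next
          case 2
          then have "Suc i mod (L - d + 1) = Suc i" by simp
          moreover have "Suc (d + i - 1) mod L = d + i" using 2 d by simp
          ultimately show ?thesis using 2 d unfolding g_def e_def oc_def by simp
        next
          case 3
          then have "Suc i mod (L - d + 1) = 0" using d by simp
          moreover have "Suc (d + i - 1) mod L = 0" using 3 d by simp
          ultimately show ?thesis using 3 d unfolding g_def e_def oc_def by simp
        qed
      qed
      have "inj_on e {..<L - d + 1}"
      proof
        fix i j assume ij: "i \<in> {..<L - d + 1}" "j \<in> {..<L - d + 1}" "e i = e j"
        show "i = j"
        proof (cases "i = 0 \<or> j = 0")
          case True
          then show ?thesis
          proof
            assume i0: "i = 0"
            show ?thesis
            proof (rule ccontr)
              assume "i \<noteq> j"
              then have "oc p = oc (d + j - 1)" using ij i0 p unfolding e_def by auto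
              then have "p = d + j - 1" using inj p ij d by (auto dest: inj_onD)
              then show False using p \<open>i \<noteq> j\<close> i0 by simp
            qed
          next
            assume j0: "j = 0"
            show ?thesis
            proof (rule ccontr)
              assume "i \<noteq> j"
              then have "oc p = oc (d + i - 1)" using ij j0 p unfolding e_def by auto
              then have "p = d + i - 1" using inj p ij d by (auto dest: inj_onD)
              then show False using p \<open>i \<noteq> j\<close> j0 by simp
            qed
          qed
        next
          case False
          then have "oc (d + i - 1) = oc (d + j - 1)" using ij unfolding e_def by auto
          then have "d + i - 1 = d + j - 1" using inj ij d False by (auto dest: inj_onD)
          then show ?thesis using False d by auto
        qed
      qed
      then show "inj_on (\<lambda>i. c {g i, g (Suc i mod (L - d + 1))}) {..<L - d + 1}"
        using ee by (subst inj_on_cong) auto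
    qed
    then show ?thesis by blast
  next
    case False
    define e where "e i = (if i = d then ch else oc i)" for i
    have "has_rainbow_cycle c (d + 1)"
    proof (rule mk_rc[where f = "\<lambda>i. ws ! i"])
      show "3 \<le> d + 1" using d by simp
      show "inj_on ((!) ws) {..<d + 1}"
        using dist len d by (auto simp: inj_on_def nth_eq_iff_index_eq)
      have ee: "c {ws ! i, ws ! (Suc i mod (d + 1))} = e i" if "i < d + 1" for i
      proof (cases "i = d")
        case True then show ?thesis unfolding e_def ch_def by (simp add: insert_commute)
      next
        case False
        then have "Suc i mod (d+1) = Suc i" "Suc i mod L = Suc i" using that d by auto
        then show ?thesis using False unfolding e_def oc_def by simp
      qed
      have "inj_on e {..<d + 1}"
      proof
        fix i j assume ij: "i \<in> {..<d + 1}" "j \<in> {..<d + 1}" "e i = e j"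
        show "i = j"
        proof (cases "i = d \<or> j = d")
          case True
          then show ?thesis using ij False unfolding e_def
            by (auto split: if_splits simp: less_Suc_eq)
        next
          case False
          then show ?thesis using ij inj d unfolding e_def by (auto dest: inj_onD)
        qed
      qed
      then show "inj_on (\<lambda>i. c {ws ! i, ws ! (Suc i mod (d + 1))}) {..<d + 1}"
        using ee by (subst inj_on_cong) auto
    qed
    then show ?thesis by blast
  qed
qed

lemma chain_rc:
  assumes "\<not> has_rainbow_cycle c (D + 2)" "1 \<le> D" "1 \<le> j"
  shows "\<not> has_rainbow_cycle c (j * D + 2)"
  using assms(3)
proof (induction j rule: dec_induct)
  case base then show ?case using assms by simp
next
  case (step j)
  show ?case
  proof
    assume "has_rainbow_cycle c (Suc j * D + 2)"
    then obtain ws where ws: "rainbow_cycle c (Suc j * D + 2) ws" unfolding has_rainbow_cycle_def by blast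
    have "j * D \<ge> 1" using step assms by simp
    then have "has_rainbow_cycle c (D + 1 + 1) \<or> has_rainbow_cycle c (Suc j * D + 2 - (D + 1) + 1)"
      using split_rc[OF ws, of "D+1"] assms by simp
    moreover have "Suc j * D + 2 - (D + 1) + 1 = j * D + 2" by simp
    ultimately show False using step assms by simp
  qed
qed


lemma mod_blk:
  fixes P j k n :: nat
  assumes "j < k" "0 < n"
  shows "(P * k + j) mod (n * k) = (P mod n) * k + j"
proof -
  have e1: "P * k + j = (P div n) * (n * k) + ((P mod n) * k + j)"
    by (metis (no_types, lifting) add.assoc add.commute div_mult_mod_eq mult.assoc mult.commute distrib_left)
  have lt: "(P mod n) * k + j < n * k"
  proof -
    have "P mod n + 1 \<le> n" using mod_less_divisor[OF assms(2), of P] by linarith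
    then have "(P mod n + 1) * k \<le> n * k" by (rule mult_right_mono) simp
    then show ?thesis using assms by simp
  qed
  have "(P*k+j) mod (n*k) = ((P mod n)*k + j + (P div n)*(n*k)) mod (n*k)"
  proof -
    have "P*k+j = (P mod n)*k + j + (P div n)*(n*k)" using e1 by linarith
    then show ?thesis by (simp only:)
  qed
  also have "\<dots> = ((P mod n)*k+j) mod (n*k)" by (rule mod_mult_self1)
  also have "\<dots> = (P mod n)*k + j" using lt by simp
  finally show ?thesis .
qed

lemma blk_inj:
  fixes p p' i i' k :: nat
  assumes "i < k" "i' < k" "p * k + i = p' * k + i'"
  shows "p = p'"
proof -
  have "(p * k + i) div k = p" using assms(1) by simp
  moreover have "(p' * k + i') div k = p'" using assms(2) by simp
  ultimately have "p = (p' * k + i') div k" using assms(3) by metis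
  then show ?thesis using \<open>(p' * k + i') div k = p'\<close> by simp
qed

lemma add_mod_inj:
  fixes a s s' m :: nat
  assumes "(a + s) mod m = (a + s') mod m" "s < m" "s' < m"
  shows "s = s'"
proof -
  have "s mod m = s' mod m" using assms(1)
    by (simp add: nat_mod_eq_iff)
  then show ?thesis using assms by simp
qed


locale L9 =
  fixes c :: "'a set \<Rightarrow> 'c" and k :: nat and vs :: "'a list"
  assumes k2: "2 \<le> k"
    and rc: "rainbow_cycle c (k * (2*k+1)) vs"
    and nor: "\<not> has_rainbow_cycle c (2*k+1)"
begin

definition "m = k * (2*k+1)"
definition "x i = vs ! (i mod m)"
definition "col i = c {x i, x (Suc i)}"
definition "chi a = c {x a, x (a + 2*k)}"

lemma m_eq: "m = 2*(k*k) + k" by (simp add: m_def algebra_simps)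
lemma m_nk: "m = (2*k+1) * k" by (simp add: m_def)
lemma kk: "2*k \<le> k*k" using k2 by simp
lemma m_ge: "5*k \<le> m" using m_eq kk by linarith
lemma m_pos: "0 < m" using m_ge k2 by linarith

lemma len: "length vs = m" and dist: "distinct vs"
  using rc by (simp_all add: rainbow_cycle_def m_def)

lemma x_eq: "x i = x j \<longleftrightarrow> i mod m = j mod m"
  using dist len m_pos by (simp add: x_def nth_eq_iff_index_eq)

lemma x_per: "x (i + m) = x i" by (simp add: x_def)

lemma col_eq: assumes "col i = col j" shows "i mod m = j mod m"
proof -
  have inj: "inj_on (\<lambda>i. c {vs!i, vs!(Suc i mod m)}) {..<m}"
    using rc by (simp add: rainbow_cycle_def m_def)
  have e: "col i = c {vs!(i mod m), vs!(Suc (i mod m) mod m)}" for i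
    unfolding col_def x_def by (simp add: mod_Suc_eq)
  show ?thesis using inj_onD[OF inj] assms e m_pos by auto
qed

lemma col_inj: "col (a+s) = col (a+s') \<Longrightarrow> s < m \<Longrightarrow> s' < m \<Longrightarrow> s = s'"
  using col_eq add_mod_inj by blast

lemma x_inj: "x (a+s) = x (a+s') \<Longrightarrow> s < m \<Longrightarrow> s' < m \<Longrightarrow> s = s'"
  using x_eq add_mod_inj by blast

lemma chi_in: "\<exists>i<2*k. chi a = col (a+i)"
proof (rule ccontr)
  assume H: "\<not> (\<exists>i<2*k. chi a = col (a+i))"
  define e where "e i = (if i = 2*k then chi a else col (a+i))" for i
  have "has_rainbow_cycle c (2*k+1)"
  proof (rule mk_rc[where f = "\<lambda>i. x (a+i)"])
    show "3 \<le> 2*k+1" using k2 by simp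
    show "inj_on (\<lambda>i. x (a+i)) {..<2*k+1}"
    proof (rule inj_onI)
      fix i j assume "i \<in> {..<2*k+1}" "j \<in> {..<2*k+1}" "x (a+i) = x (a+j)"
      moreover have "i < m" "j < m" using calculation m_ge k2 by auto
      ultimately show "i = j" using x_inj by blast
    qed
    have ee: "c {x (a+i), x (a + Suc i mod (2*k+1))} = e i" if hi: "i < 2*k+1" for i
    proof (cases "i = 2*k")
      case True then show ?thesis unfolding e_def chi_def by (simp add: insert_commute)
    next
      case False
      then have "Suc i mod (2*k+1) = Suc i" using hi by simp
      then show ?thesis using False unfolding e_def col_def by simp
    qed
    have "inj_on e {..<2*k+1}"
    proof
      fix i j assume ij: "i \<in> {..<2*k+1}" "j \<in> {..<2*k+1}" "e i = e j"
      show "i = j"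
      proof (cases "i = 2*k \<or> j = 2*k")
        case True then show ?thesis using ij H unfolding e_def
          by (auto split: if_splits simp: less_Suc_eq)
      next
        case False
        then have "col (a+i) = col (a+j)" using ij unfolding e_def by simp
        moreover have "i < m" "j < m" using ij m_ge k2 by auto
        ultimately show ?thesis using col_inj by blast
      qed
    qed
    then show "inj_on (\<lambda>i. c {x (a+i), x (a + Suc i mod (2*k+1))}) {..<2*k+1}"
      using ee by (subst inj_on_cong) auto
  qed
  with nor show False by simp
qed

lemma D_eq: "k * (2*k - 1) + 2 = m - 2*k + 2"
proof -
  have "k * (2*k - 1) + k = 2*(k*k)" using k2 by (cases k) (simp_all add: algebra_simps)
  then show ?thesis using m_eq by linarith
qed

lemma no_long: "\<not> has_rainbow_cycle c (m - 2*k + 2)"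
proof -
  have "\<not> has_rainbow_cycle c (k * (2*k - 1) + 2)"
    by (rule chain_rc) (use nor k2 in auto)
  then show ?thesis using D_eq by simp
qed

lemma Z1:
  assumes h0: "chi a = col (a+i0)" "i0 < k" and h1: "chi (a+k) = col (a+k+i1)" "k \<le> i1" "i1 < 2*k"
  shows False
proof -
  define L where "L = m - 2*k + 2"
  define p where "p i = (if i = 0 then 0 else if i \<le> k+1 then 2*k+1-i else i+2*k-2)" for i
  define q where "q i = (if i = 0 then i0 else if i \<le> k then 2*k-i else if i = k+1 then k+i1 else i+2*k-2)" for i
  have Lge: "3*k + 2 \<le> L" using m_ge L_def by linarith
  have pm: "p i < m" if "i < L" for i using that m_ge k2 unfolding p_def L_def by auto
  have qm: "q i < m" if "i < L" for i using that m_ge k2 h0 h1 unfolding q_def L_def by auto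
  have pinj: "inj_on p {..<L}"
    using k2 by (intro inj_onI) (auto simp: p_def split: if_splits)
  have qinj: "inj_on q {..<L}"
    using h0 h1 by (intro inj_onI) (auto simp: q_def split: if_splits)
  have edges: "c {x (a + p i), x (a + p (Suc i mod L))} = col (a + q i)" if hi: "i < L" for i
  proof -
    consider "i = 0" | "1 \<le> i" "i \<le> k" | "i = k+1" | "k+2 \<le> i" "i < L - 1" | "i = L - 1"
      using hi by linarith
    then show ?thesis
    proof cases
      case 1
      then have "Suc i mod L = 1" using Lge k2 by simp
      then show ?thesis using 1 h0 k2 unfolding p_def q_def chi_def by simp
    next
      case 2
      then have "Suc i mod L = Suc i" using Lge by simp
      moreover have "Suc (a + (2*k - i)) = a + (2*k+1-i)" using 2 by simp
      ultimately show ?thesis using 2 k2 unfolding p_def q_def col_def by (simp add: insert_commute)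
    next
      case 3
      then have "Suc i = k+2" by simp
      moreover have "k + 2 < L" using Lge k2 by linarith
      ultimately have "Suc i mod L = k+2" by simp
      moreover have "a + (k+2+2*k-2) = a + k + 2*k" by simp
      ultimately show ?thesis using 3 h1 k2 unfolding p_def q_def chi_def by (simp add: ac_simps)
    next
      case 4
      then have "Suc i mod L = Suc i" using Lge by simp
      moreover have "Suc (a + (i+2*k-2)) = a + (Suc i + 2*k - 2)" using 4 by simp
      ultimately show ?thesis using 4 k2 unfolding p_def q_def col_def by simp
    next
      case 5
      then have "Suc i mod L = 0" using Lge by simp
      moreover have "i \<noteq> 0" "\<not> i \<le> k+1" "i \<noteq> k+1" "\<not> i \<le> k" using 5 Lge k2 by auto
      moreover have "i + 2*k - 2 = m - 1" using 5 L_def m_ge k2 by simp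
      ultimately have "p i = m - 1" "q i = m - 1" "p (Suc i mod L) = 0"
        unfolding p_def q_def by auto
      moreover have "Suc (a + (m - 1)) = a + m" using m_pos by simp
      ultimately show ?thesis using x_per[of a] unfolding col_def by simp
    qed
  qed
  have "has_rainbow_cycle c L"
  proof (rule mk_rc[where f = "\<lambda>i. x (a + p i)"])
    show "3 \<le> L" using Lge k2 by simp
    show "inj_on (\<lambda>i. x (a + p i)) {..<L}"
    proof (rule inj_onI)
      fix i j assume ij: "i \<in> {..<L}" "j \<in> {..<L}" "x (a + p i) = x (a + p j)"
      then have "p i = p j" using x_inj pm by blast
      then show "i = j" using pinj ij by (auto dest: inj_onD)
    qed
    show "inj_on (\<lambda>i. c {x (a + p i), x (a + p (Suc i mod L))}) {..<L}"
    proof (rule inj_onI)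
      fix i j assume ij: "i \<in> {..<L}" "j \<in> {..<L}"
        "c {x (a + p i), x (a + p (Suc i mod L))} = c {x (a + p j), x (a + p (Suc j mod L))}"
      then have "col (a + q i) = col (a + q j)" using edges by simp
      then have "q i = q j" using col_inj qm ij by blast
      then show "i = j" using qinj ij by (auto dest: inj_onD)
    qed
  qed
  then show False using no_long L_def by simp
qed

definition "Lt a \<longleftrightarrow> (\<exists>i<k. chi a = col (a+i))"

lemma notLt: "\<not> Lt a \<Longrightarrow> \<exists>i. k \<le> i \<and> i < 2*k \<and> chi a = col (a+i)"
  using chi_in[of a] unfolding Lt_def by (meson not_less)

lemma Lt_step: "Lt a \<Longrightarrow> Lt (a+k)"
proof (rule ccontr)
  assume "Lt a" "\<not> Lt (a+k)"
  then obtain i0 i1 where "chi a = col (a+i0)" "i0 < k" "chi (a+k) = col (a+k+i1)" "k \<le> i1" "i1 < 2*k"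
    using notLt unfolding Lt_def by blast
  then show False using Z1 by blast
qed

lemma Lt_steps: "Lt a \<Longrightarrow> Lt (a + s*k)"
proof (induction s)
  case 0 then show ?case by simp
next
  case (Suc s)
  then have "Lt (a + s*k + k)" using Lt_step by blast
  then show ?case by (simp add: ac_simps)
qed

lemma chi_per: "chi (a + m) = chi a"
proof -
  have "x (a + m + 2*k) = x (a + 2*k)" using x_per[of "a + 2*k"] by (simp add: ac_simps)
  then show ?thesis unfolding chi_def using x_per by simp
qed

lemma col_per: "col (a + m) = col a"
proof -
  have "x (Suc (a + m)) = x (Suc a)" using x_per[of "Suc a"] by simp
  then show ?thesis unfolding col_def using x_per by simp
qed

lemma Lt_per: "Lt (a + m) = Lt a"
proof -
  have "col (a + m + i) = col (a + i)" for i using col_per[of "a+i"] by (simp add: ac_simps)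
  then show ?thesis unfolding Lt_def using chi_per by simp
qed

lemma Lt_perm: "Lt (t * m) = Lt 0"
proof (induction t)
  case (Suc t)
  then show ?case using Lt_per[of "t*m"] by (simp add: add.commute)
qed simp

lemma allL: "Lt 0 \<Longrightarrow> Lt (t*k)"
  using Lt_steps[of 0 t] by simp

lemma allR: assumes "\<not> Lt 0" shows "\<not> Lt (t*k)"
proof
  assume "Lt (t*k)"
  then have "Lt (t*k + (2*k*t)*k)" by (rule Lt_steps)
  moreover have "t*k + (2*k*t)*k = t*m" by (simp add: m_eq algebra_simps)
  ultimately show False using Lt_perm assms by simp
qed

end

context L9 begin
lemma chi_blk_inj:
  assumes P: "P < 2*k+1" "P' < 2*k+1" and e: "chi (P*k) = chi (P'*k)"
  shows "P = P'"
proof (cases "Lt 0")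
  case True
  then obtain i i' where i: "i < k" "chi (P*k) = col (P*k+i)" "i' < k" "chi (P'*k) = col (P'*k+i')"
    using allL unfolding Lt_def by blast
  then have "col (P*k+i) = col (P'*k+i')" using e by simp
  then have "(P*k+i) mod m = (P'*k+i') mod m" by (rule col_eq)
  moreover have "(P*k+i) mod m = (P mod (2*k+1))*k + i" unfolding m_nk by (rule mod_blk) (use i in auto)
  moreover have "(P'*k+i') mod m = (P' mod (2*k+1))*k + i'" unfolding m_nk by (rule mod_blk) (use i in auto)
  ultimately have "(P mod (2*k+1))*k + i = (P' mod (2*k+1))*k + i'" by linarith
  then have "P*k + i = P'*k + i'" using P by simp
  then show ?thesis using blk_inj i by blast
next
  case False
  then obtain i i' where i: "k \<le> i" "i < 2*k" "chi (P*k) = col (P*k+i)"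
      "k \<le> i'" "i' < 2*k" "chi (P'*k) = col (P'*k+i')"
    using allR[OF False, of P] allR[OF False, of P'] notLt by blast
  have r1: "P*k+i = (1+P)*k + (i-k)" "P'*k+i' = (1+P')*k + (i'-k)" using i by simp_all
  have "col (P*k+i) = col (P'*k+i')" using e i by simp
  then have "(P*k+i) mod m = (P'*k+i') mod m" by (rule col_eq)
  moreover have "(P*k+i) mod m = ((1+P) mod (2*k+1))*k + (i-k)" unfolding m_nk r1 by (rule mod_blk) (use i in auto)
  moreover have "(P'*k+i') mod m = ((1+P') mod (2*k+1))*k + (i'-k)" unfolding m_nk r1 by (rule mod_blk) (use i in auto)
  ultimately have "((1+P) mod (2*k+1))*k + (i-k) = ((1+P') mod (2*k+1))*k + (i'-k)" by linarith
  then have "(1+P) mod (2*k+1) = (1+P') mod (2*k+1)" by (rule blk_inj[rotated 2]) (use i in auto)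
  then show ?thesis using add_mod_inj P by blast
qed

definition "tau i = (if i \<le> k then 2*i else 2*(i-k)-1)"

lemma tau_lt: "i < 2*k+1 \<Longrightarrow> tau i < 2*k+1"
  unfolding tau_def by auto

lemma tau_inj: "inj_on tau {..<2*k+1}"
proof (rule inj_onI)
  fix i j assume ij: "i \<in> {..<2*k+1}" "j \<in> {..<2*k+1}" "tau i = tau j"
  show "i = j"
  proof (cases "i \<le> k"; cases "j \<le> k")
    assume "i \<le> k" "j \<le> k" then show ?thesis using ij(3) unfolding tau_def by simp
  next
    assume a: "i \<le> k" "\<not> j \<le> k"
    then have "2*i = 2*(j-k)-1" using ij(3) unfolding tau_def by simp
    then show ?thesis using a by presburger
  next
    assume a: "\<not> i \<le> k" "j \<le> k"
    then have "2*(i-k)-1 = 2*j" using ij(3) unfolding tau_def by simp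
    then show ?thesis using a by presburger
  next
    assume a: "\<not> i \<le> k" "\<not> j \<le> k"
    then have "2*(i-k)-1 = 2*(j-k)-1" using ij(3) unfolding tau_def by simp
    then show ?thesis using a by simp
  qed
qed

lemma tau_edge:
  assumes "i < 2*k+1"
  shows "c {x (tau i * k), x (tau (Suc i mod (2*k+1)) * k)} = chi (tau i * k)"
proof -
  consider "i < k" | "i = k" | "k < i" "i < 2*k" | "i = 2*k" using assms by linarith
  then show ?thesis
  proof cases
    case 1
    then have "tau (Suc i mod (2*k+1)) * k = tau i * k + 2*k"
      unfolding tau_def by (simp add: algebra_simps)
    then show ?thesis unfolding chi_def by simp
  next
    case 2
    then have "tau (Suc i mod (2*k+1)) = 1" using k2 unfolding tau_def by simp
    moreover have "x (tau i * k + 2*k) = x k"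
    proof -
      have e: "tau i * k + 2*k = k + m" using 2 unfolding tau_def by (simp add: m_eq algebra_simps)
      have "x (tau i * k + 2*k) = x (k + m)" by (simp only: e)
      also have "\<dots> = x k" by (rule x_per)
      finally show ?thesis .
    qed
    ultimately show ?thesis unfolding chi_def by simp
  next
    case 3
    then have "Suc i mod (2*k+1) = Suc i" by simp
    moreover have "tau (Suc i) = tau i + 2" using 3 unfolding tau_def by auto
    ultimately have "tau (Suc i mod (2*k+1)) * k = tau i * k + 2*k" by (simp add: algebra_simps)
    then show ?thesis unfolding chi_def by simp
  next
    case 4
    then have "tau (Suc i mod (2*k+1)) = 0" unfolding tau_def by simp
    moreover have "tau i = 2*k - 1" using 4 k2 unfolding tau_def by simp
    moreover have "(2*k - 1) * k + 2*k = m"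
    proof -
      have "(2*k - 1) * k + k = 2*(k*k)" using k2 by (cases k) (simp_all add: algebra_simps)
      then show ?thesis using m_eq by linarith
    qed
    ultimately show ?thesis unfolding chi_def using x_per[of 0] by (simp add: insert_commute)
  qed
qed

lemma contradiction: False
proof -
  have "has_rainbow_cycle c (2*k+1)"
  proof (rule mk_rc[where f = "\<lambda>i. x (tau i * k)"])
    show "3 \<le> 2*k+1" using k2 by simp
    show "inj_on (\<lambda>i. x (tau i * k)) {..<2*k+1}"
    proof (rule inj_onI)
      fix i j assume ij: "i \<in> {..<2*k+1}" "j \<in> {..<2*k+1}" "x (tau i * k) = x (tau j * k)"
      have "tau i < 2*k+1" "tau j < 2*k+1" using tau_lt ij by auto
      moreover have "0 < k" using k2 by simp
      ultimately have "tau i * k < (2*k+1)*k" "tau j * k < (2*k+1)*k"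
        by (metis mult_strict_right_mono)+
      then have "tau i * k < m" "tau j * k < m" using m_nk by simp_all
      then have "tau i * k = tau j * k" using x_inj[of 0 "tau i * k" "tau j * k"] ij by simp
      then have "tau i = tau j" using k2 by simp
      then show "i = j" using tau_inj ij by (auto dest: inj_onD)
    qed
    show "inj_on (\<lambda>i. c {x (tau i * k), x (tau (Suc i mod (2*k+1)) * k)}) {..<2*k+1}"
    proof (rule inj_onI)
      fix i j assume ij: "i \<in> {..<2*k+1}" "j \<in> {..<2*k+1}"
        "c {x (tau i * k), x (tau (Suc i mod (2*k+1)) * k)} = c {x (tau j * k), x (tau (Suc j mod (2*k+1)) * k)}"
      then have "chi (tau i * k) = chi (tau j * k)" using tau_edge by simp
      then have "tau i = tau j" using chi_blk_inj tau_lt ij by auto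
      then show "i = j" using tau_inj ij by (auto dest: inj_onD)
    qed
  qed
  then show False using nor by simp
qed

end

theorem lemma9:
  fixes c :: "'a set \<Rightarrow> 'c" and k n m :: nat
  assumes "n = 2 * k + 1"
    and "m = n choose 2"
    and "\<not> has_rainbow_cycle c n"
  shows "\<not> has_rainbow_cycle c m"
proof
  assume H: "has_rainbow_cycle c m"
  have "m = (2*k+1) * (2*k+1 - 1) div 2" using assms(1,2) by (simp add: choose_two)
  also have "\<dots> = k * (2*k+1)" by simp
  finally have mk: "m = k * (2*k+1)" .
  then obtain vs where vs: "rainbow_cycle c (k * (2*k+1)) vs" using H unfolding has_rainbow_cycle_def by blast
  consider "k = 0" | "k = 1" | "2 \<le> k" by linarith
  then show False
  proof cases
    case 1 then show False using vs unfolding rainbow_cycle_def by simp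
  next
    case 2 then show False using H mk assms(1,3) by simp
  next
    case 3
    interpret L9 c k vs using 3 vs assms(1,3) by unfold_locales simp_all
    show False by (rule contradiction)
  qed
qed

end
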